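(* For every integer $n\ge 1$, every independence root $z$ of every finite simple graph on $n$ vertices satisfies $|z|\le 3^{\frac{n}{3}}+n-1$. That is, $M(n)\le 3^{\frac{n}{3}}+n-1$, where $M(n)$ is the maximum modulus of an independence root over all graphs on $n$ vertices.
   Context: For a finite simple graph $G$, the independence polynomial is $i(G,x)=\sum_{k=0}^{\alpha(G)} i_k x^k$, where $i_k$ is the number of independent sets of size $k$ in $G$ (with $i_0=1$) and $\alpha(G)$ is the independence number. Its complex roots are the independence roots of $G$. *)

theory Defs
  imports "HOL-Analysis.Analysis" "HOL-Computational_Algebra.Polynomial"
begin

definition simple_graph :: "'a set \<Rightarrow> ('a \<Rightarrow> 'a \<Rightarrow> bool) \<Rightarrow> bool" where
  "simple_graph V E \<longleftrightarrow> finite V \<and> (\<forall>x\<in>V. \<not> E x x) \<and>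
     (\<forall>x\<in>V. \<forall>y\<in>V. E x y \<longrightarrow> E y x)"

definition independent_set :: "'a set \<Rightarrow> ('a \<Rightarrow> 'a \<Rightarrow> bool) \<Rightarrow> 'a set \<Rightarrow> bool" where
  "independent_set V E S \<longleftrightarrow> S \<subseteq> V \<and> (\<forall>x\<in>S. \<forall>y\<in>S. \<not> E x y)"

definition indep_poly :: "'a set \<Rightarrow> ('a \<Rightarrow> 'a \<Rightarrow> bool) \<Rightarrow> complex poly" where
  "indep_poly V E = (\<Sum>S\<in>{S. independent_set V E S}. monom 1 (card S))"

definition independence_root :: "'a set \<Rightarrow> ('a \<Rightarrow> 'a \<Rightarrow> bool) \<Rightarrow> complex \<Rightarrow> bool" where
  "independence_root V E z \<longleftrightarrow> poly (indep_poly V E) z = 0"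

end

theory Submission imports Defs begin

lemma cube_le: "(m::nat)^3 \<le> 3^m"
proof (induction m rule: less_induct)
  case (less m)
  show ?case
  proof (cases "m \<le> 3")
    case True
    then have "m = 0 \<or> m = 1 \<or> m = 2 \<or> m = 3" by auto
    then show ?thesis by auto
  next
    case False
    then obtain k where k: "m = Suc k" "k \<ge> 3" by (cases m) auto
    have ih: "k^3 \<le> 3^k" using less k by auto
    have "(Suc k)^3 \<le> 3 * k^3"
    proof -
      have "(Suc k)^3 = k^3 + 3*k^2 + 3*k + 1" by (simp add: power2_eq_square power3_eq_cube algebra_simps)
      moreover have "3*k^2 \<le> k^3" using k(2) by (simp add: power2_eq_square power3_eq_cube)
      moreover have "3*k + 1 \<le> k^3"
      proof -
        have "3*3 \<le> k*k" using k(2) by (rule mult_le_mono) (rule k(2))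
        hence "9 * k \<le> k*k*k" using mult_le_mono1 by fastforce
        hence "9 * k \<le> k^3" by (simp add: power3_eq_cube)
        then show ?thesis using k(2) by linarith
      qed
      ultimately show ?thesis by linarith
    qed
    also have "\<dots> \<le> 3 * 3^k" using ih by simp
    finally show ?thesis using k by simp
  qed
qed

lemma EK:
  fixes b :: "nat \<Rightarrow> real" and w :: complex
  assumes mono: "\<And>k. k < m \<Longrightarrow> b k \<le> b (Suc k)"
    and b0: "b 0 \<ge> 0" and bm: "b m > 0"
    and root: "(\<Sum>k\<le>m. of_real (b k) * w^k) = 0"
  shows "cmod w \<le> 1"
proof (rule ccontr)
  assume "\<not> cmod w \<le> 1"
  hence w1: "cmod w > 1" by simp
  have ident: "(1 - w) * (\<Sum>k\<le>m. of_real (b k) * w^k) =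
     of_real (b 0) + (\<Sum>k<m. of_real (b (Suc k) - b k) * w^(Suc k)) - of_real (b m) * w^(Suc m)" for m
    by (induction m) (auto simp: algebra_simps)
  hence eq: "of_real (b m) * w^(Suc m) = of_real (b 0) + (\<Sum>k<m. of_real (b (Suc k) - b k) * w^(Suc k))"
  proof -
    have "0 = of_real (b 0) + (\<Sum>k<m. of_real (b (Suc k) - b k) * w^(Suc k)) - of_real (b m) * w^(Suc m)"
      using ident[of m] root by simp
    thus ?thesis by (simp add: algebra_simps)
  qed
  have "b m * cmod w ^ Suc m = cmod (of_real (b m) * w^(Suc m))"
    using bm by (simp add: norm_mult norm_power)
  also have "\<dots> \<le> cmod (of_real (b 0) :: complex) + cmod (\<Sum>k<m. of_real (b (Suc k) - b k) * w^(Suc k))"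
    unfolding eq by (rule norm_triangle_ineq)
  also have "\<dots> \<le> b 0 * cmod w ^ m + (\<Sum>k<m. (b (Suc k) - b k) * cmod w ^ m)"
  proof (rule add_mono)
    show "cmod (of_real (b 0) :: complex) \<le> b 0 * cmod w ^ m"
      using b0 w1 one_le_power[of "cmod w" m] mult_left_mono[of 1 "cmod w ^ m" "b 0"] by simp
    have "cmod (\<Sum>k<m. of_real (b (Suc k) - b k) * w^(Suc k)) \<le> (\<Sum>k<m. cmod (of_real (b (Suc k) - b k) * w^(Suc k)))"
      by (rule norm_sum)
    also have "\<dots> \<le> (\<Sum>k<m. (b (Suc k) - b k) * cmod w ^ m)"
    proof (rule sum_mono)
      fix k assume "k \<in> {..<m}"
      hence km: "k < m" by simp
      have "0 \<le> b (Suc k) - b k" using mono[OF km] by simp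
      moreover have "cmod w ^ Suc k \<le> cmod w ^ m" using w1 km by (intro power_increasing) auto
      moreover have "cmod (of_real (b (Suc k) - b k) * w^(Suc k)) = (b (Suc k) - b k) * cmod w ^ Suc k"
        using \<open>0 \<le> b (Suc k) - b k\<close> by (simp add: norm_mult norm_power del: of_real_diff)
      ultimately show "cmod (of_real (b (Suc k) - b k) * w^(Suc k)) \<le> (b (Suc k) - b k) * cmod w ^ m"
        by (simp add: mult_left_mono)
    qed
    finally show "cmod (\<Sum>k<m. of_real (b (Suc k) - b k) * w^(Suc k)) \<le> (\<Sum>k<m. (b (Suc k) - b k) * cmod w ^ m)" .
  qed
  also have "\<dots> = b m * cmod w ^ m"
  proof -
    have "(\<Sum>k<m. (b (Suc k) - b k) * cmod w ^ m) = (\<Sum>k<m. b (Suc k) - b k) * cmod w ^ m"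
      by (simp add: sum_distrib_right)
    also have "(\<Sum>k<m. b (Suc k) - b k) = b m - b 0" by (rule sum_lessThan_telescope)
    finally show ?thesis by (simp add: algebra_simps)
  qed
  finally have "b m * cmod w ^ Suc m \<le> b m * cmod w ^ m" .
  hence "cmod w * cmod w ^ m \<le> 1 * cmod w ^ m" using bm by simp
  moreover have "0 < cmod w ^ m" using w1 by (intro zero_less_power) linarith
  ultimately have "cmod w \<le> 1" by (simp add: mult_le_cancel_right)
  with w1 show False by simp
qed

definition mis :: "('a \<Rightarrow> 'a \<Rightarrow> bool) \<Rightarrow> 'a set \<Rightarrow> 'a set set" where
  "mis E W = {S. S \<subseteq> W \<and> (\<forall>x\<in>S. \<forall>y\<in>S. \<not> E x y) \<and> (\<forall>x\<in>W - S. \<exists>y\<in>S. E x y)}"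

definition nbh :: "('a \<Rightarrow> 'a \<Rightarrow> bool) \<Rightarrow> 'a set \<Rightarrow> 'a \<Rightarrow> 'a set" where
  "nbh E W u = {y\<in>W. y = u \<or> E u y}"

lemma finite_mis: "finite W \<Longrightarrow> finite (mis E W)"
  by (rule finite_subset[of _ "Pow W"]) (auto simp: mis_def)

lemma moon_moser:
  assumes sg: "simple_graph V E" and WV: "W \<subseteq> V"
  shows "card (mis E W)^3 \<le> 3^card W"
  using WV
proof (induction "card W" arbitrary: W rule: less_induct)
  case less
  have fV: "finite V" and sym: "\<forall>x\<in>V. \<forall>y\<in>V. E x y \<longrightarrow> E y x"
    using sg by (auto simp: simple_graph_def)
  have fW: "finite W" using less.prems fV finite_subset by blast
  show ?case
  proof (cases "W = {}")
    case True
    then have "mis E W = {{}}" by (auto simp: mis_def)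
    then show ?thesis using True by simp
  next
    case False
    define f where "f u = card (nbh E W u)" for u
    have finf: "finite (f ` W)" using fW by simp
    have "Min (f ` W) \<in> f ` W" using Min_in[OF finf] False by simp
    then obtain v where v1: "v \<in> W" and v1': "f v = Min (f ` W)" by force
    have v2: "f v \<le> f u" if "u \<in> W" for u
      using v1' Min_le[OF finf] that by simp
    define d where "d = f v"
    have nbfin: "finite (nbh E W u)" for u using fW by (simp add: nbh_def)
    have nbsub: "nbh E W u \<subseteq> W" for u by (auto simp: nbh_def)
    have uin: "u \<in> W \<Longrightarrow> u \<in> nbh E W u" for u by (auto simp: nbh_def)
    define c where "c u = card (mis E (W - nbh E W u))" for u
    have cardW: "card W > 0" using False fW by (simp add: card_gt_0_iff)
    have cbound: "c u ^3 \<le> 3^(card W - d)" if "u \<in> nbh E W v" for u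
    proof -
      have uW: "u \<in> W" using that nbsub by blast
      have cardeq: "card (W - nbh E W u) = card W - f u"
        using card_Diff_subset[OF nbfin nbsub] f_def by simp
      have "f u \<ge> 1" using uin[OF uW] nbfin[of u] unfolding f_def
        by (metis One_nat_def Suc_leI card_gt_0_iff empty_iff)
      hence lt: "card (W - nbh E W u) < card W" using cardeq cardW by simp
      have sub: "W - nbh E W u \<subseteq> V" using less.prems by blast
      have "c u^3 \<le> 3^card (W - nbh E W u)" using less.hyps[OF lt sub] unfolding c_def .
      also have "\<dots> \<le> 3^(card W - d)" using cardeq v2[OF uW] d_def
        by (intro power_increasing) auto
      finally show ?thesis .
    qed
    have cover: "mis E W \<subseteq> (\<Union>u\<in>nbh E W v. {S\<in>mis E W. u \<in> S})"
    proof
      fix S assume S: "S \<in> mis E W"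
      show "S \<in> (\<Union>u\<in>nbh E W v. {S\<in>mis E W. u \<in> S})"
      proof (cases "v \<in> S")
        case True then show ?thesis using S v1 uin by blast
      next
        case False
        then have "v \<in> W - S" using v1 by simp
        then obtain y where y: "y \<in> S" "E v y" using S unfolding mis_def by blast
        then have "y \<in> nbh E W v" using S by (auto simp: mis_def nbh_def)
        then show ?thesis using S y by blast
      qed
    qed
    have part: "card {S\<in>mis E W. u \<in> S} \<le> c u" if "u \<in> nbh E W v" for u
    proof -
      have uW: "u \<in> W" using that nbsub by blast
      have "card {S\<in>mis E W. u \<in> S} \<le> card (mis E (W - nbh E W u))"
      proof (rule card_inj_on_le[where f="\<lambda>S. S - {u}"])
        show "inj_on (\<lambda>S. S - {u}) {S\<in>mis E W. u \<in> S}"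
          unfolding inj_on_def by (metis (mono_tags, lifting) insert_Diff mem_Collect_eq)
        show "(\<lambda>S. S - {u}) ` {S\<in>mis E W. u \<in> S} \<subseteq> mis E (W - nbh E W u)"
        proof clarify
          fix S assume S: "S \<in> mis E W" "u \<in> S"
          have SW: "S \<subseteq> W" and ind: "\<forall>x\<in>S. \<forall>y\<in>S. \<not> E x y" and mx: "\<forall>x\<in>W - S. \<exists>y\<in>S. E x y"
            using S(1) by (auto simp: mis_def)
          show "S - {u} \<in> mis E (W - nbh E W u)"
            unfolding mis_def
          proof (intro CollectI conjI ballI)
            show "S - {u} \<subseteq> W - nbh E W u" using SW ind S(2) by (auto simp: nbh_def)
            show "\<not> E x y" if "x \<in> S - {u}" "y \<in> S - {u}" for x y using ind that by auto
            fix x assume x: "x \<in> W - nbh E W u - (S - {u})"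
            then have x1: "x \<in> W - S" "x \<noteq> u" "\<not> E u x" by (auto simp: nbh_def)
            then obtain y where y: "y \<in> S" "E x y" using mx by auto
            have "y \<noteq> u"
            proof
              assume "y = u"
              then have "E u x" using sym y x1 uW less.prems by blast
              with x1 show False by simp
            qed
            thus "\<exists>y\<in>S - {u}. E x y" using y by auto
          qed
        qed
        show "finite (mis E (W - nbh E W u))" using fW by (simp add: finite_mis)
      qed
      thus ?thesis by (simp add: c_def)
    qed
    have finU: "finite (\<Union>u\<in>nbh E W v. {S\<in>mis E W. u \<in> S})"
      using nbfin finite_mis[OF fW] by auto
    have "card (mis E W) \<le> card (\<Union>u\<in>nbh E W v. {S\<in>mis E W. u \<in> S})"
      by (rule card_mono[OF finU cover])
    also have "\<dots> \<le> (\<Sum>u\<in>nbh E W v. card {S\<in>mis E W. u \<in> S})"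
      by (rule card_UN_le[OF nbfin])
    also have "\<dots> \<le> (\<Sum>u\<in>nbh E W v. c u)" using part by (rule sum_mono)
    finally have c1: "card (mis E W) \<le> (\<Sum>u\<in>nbh E W v. c u)" .
    define K where "K = Max (c ` nbh E W v)"
    have ne: "c ` nbh E W v \<noteq> {}" using uin[OF v1] by auto
    have Kin: "K \<in> c ` nbh E W v" unfolding K_def using Max_in[OF _ ne] nbfin by simp
    have Kge: "c u \<le> K" if "u \<in> nbh E W v" for u unfolding K_def using that nbfin by simp
    have "(\<Sum>u\<in>nbh E W v. c u) \<le> card (nbh E W v) * K"
      using sum_bounded_above[of "nbh E W v" c K] Kge by simp
    with c1 have c2: "card (mis E W) \<le> d * K" by (simp add: d_def f_def)
    have K3: "K^3 \<le> 3^(card W - d)" using Kin cbound by auto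
    have dle: "d \<le> card W" unfolding d_def f_def using card_mono[OF fW nbsub] .
    have "card (mis E W)^3 \<le> (d*K)^3" using c2 by (rule power_mono) simp
    also have "\<dots> = d^3 * K^3" by (simp add: power_mult_distrib)
    also have "\<dots> \<le> 3^d * 3^(card W - d)" using cube_le[of d] K3 by (rule mult_le_mono)
    also have "\<dots> = 3^card W" using dle by (simp add: power_add[symmetric])
    finally show ?thesis .
  qed
qed

theorem theorem3:
  fixes V :: "'a set" and E :: "'a \<Rightarrow> 'a \<Rightarrow> bool" and n :: nat and z :: complex
  assumes "n \<ge> 1"
    and "simple_graph V E"
    and "card V = n"
    and "independence_root V E z"
  shows "cmod z \<le> 3 powr (real n / 3) + real n - 1"
proof -
  note sg = assms(2)
  have fV: "finite V" and sym: "\<forall>x\<in>V. \<forall>y\<in>V. E x y \<longrightarrow> E y x" and irr: "\<forall>x\<in>V. \<not> E x x"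
    using sg by (auto simp: simple_graph_def)
  define I where "I = {S. independent_set V E S}"
  have finI: "finite I"
    by (rule finite_subset[of _ "Pow V"]) (auto simp: I_def independent_set_def fV)
  have emp: "{} \<in> I" by (simp add: I_def independent_set_def)
  have subfin: "finite S" if "S \<in> I" for S
    using that fV by (auto simp: I_def independent_set_def intro: finite_subset)
  define al where "al = Max (card ` I)"
  have cardle: "card S \<le> al" if "S \<in> I" for S unfolding al_def using finI that by simp
  have "al \<in> card ` I" unfolding al_def using finI emp by (intro Max_in) auto
  then obtain T where T: "T \<in> I" "card T = al" by force
  have TV: "T \<subseteq> V" using T by (simp add: I_def independent_set_def)
  have aln: "al \<le> n" using card_mono[OF fV TV] T assms(3) by simp
  define A where "A k = {S\<in>I. card S = k}" for k
  define a where "a k = card (A k)" for k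
  have finA: "finite (A k)" for k using finI by (simp add: A_def)
  have apos: "a k \<ge> 1" if kle: "k \<le> al" for k
  proof -
    have "k \<le> card T" using kle T by simp
    then obtain U where U: "U \<subseteq> T" "card U = k" by (rule obtain_subset_with_card_n)
    have "U \<in> I" using U(1) T(1) by (auto simp: I_def independent_set_def)
    hence "U \<in> A k" using U by (simp add: A_def)
    hence "A k \<noteq> {}" by auto
    thus ?thesis using finA[of k] by (simp add: a_def Suc_le_eq card_gt_0_iff)
  qed
  have polyeq: "poly (indep_poly V E) z = (\<Sum>k\<le>al. of_nat (a k) * z^k)"
  proof -
    have "poly (indep_poly V E) z = (\<Sum>S\<in>I. z ^ card S)"
      unfolding indep_poly_def I_def[symmetric] by (simp add: poly_sum poly_monom)
    also have "\<dots> = (\<Sum>k\<le>al. \<Sum>S\<in>{S\<in>I. card S = k}. z ^ card S)"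
      by (rule sum.group[symmetric]) (use finI cardle in auto)
    also have "\<dots> = (\<Sum>k\<le>al. of_nat (a k) * z^k)"
      by (rule sum.cong) (auto simp: a_def A_def)
    finally show ?thesis .
  qed
  define mc where "mc = card (mis E V)"
  have p1: "3 powr (real n / 3) \<ge> 1" by (rule ge_one_powr_ge_zero) auto
  have mcb: "real mc \<le> 3 powr (real n / 3)"
  proof -
    have "mc^3 \<le> 3^n" using moon_moser[OF sg subset_refl] assms(3) mc_def by simp
    hence "real mc ^3 \<le> 3^n" by (metis of_nat_le_iff of_nat_power of_nat_numeral)
    also have "(3::real)^n = (3 powr (real n / 3))^3"
      by (simp add: powr_power powr_realpow)
    finally have h3: "real mc ^ 3 \<le> (3 powr (real n / 3)) ^ 3" .
    have "0 \<le> 3 powr (real n / 3)" by simp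
    thus ?thesis using power_mono_iff[of "real mc" "3 powr (real n / 3)" 3] h3 by simp
  qed
  define B where "B = 3 powr (real n / 3) + real n - 1"
  have Bn: "B \<ge> real n" using p1 by (simp add: B_def)
  have Bpos: "B > 0" using Bn assms(1) by simp
  have ratio: "real (a k) \<le> B * real (a (Suc k))" if kal: "k < al" for k
  proof -
    define M where "M = {S \<in> A k. \<forall>x\<in>V - S. \<not> independent_set V E (insert x S)}"
    define N where "N = {S \<in> A k. \<exists>x\<in>V - S. independent_set V E (insert x S)}"
    have "A k = M \<union> N" by (auto simp: M_def N_def)
    hence akMN: "a k \<le> card M + card N" by (simp add: a_def card_Un_le)
    have cN: "card N \<le> Suc k * a (Suc k)"
    proof -
      have "N \<subseteq> (\<Union>T\<in>A (Suc k). (\<lambda>x. T - {x}) ` T)"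
      proof
        fix S assume "S \<in> N"
        then obtain x where x: "x \<in> V" "x \<notin> S" "independent_set V E (insert x S)" "S \<in> I" "card S = k"
          by (auto simp: N_def A_def)
        have "finite S" using subfin x(4) .
        hence "insert x S \<in> A (Suc k)" using x by (auto simp: A_def I_def)
        moreover have "S = insert x S - {x}" using x(2) by auto
        ultimately show "S \<in> (\<Union>T\<in>A (Suc k). (\<lambda>x. T - {x}) ` T)" by blast
      qed
      moreover have "finite (\<Union>T\<in>A (Suc k). (\<lambda>x. T - {x}) ` T)"
        using finA subfin by (auto simp: A_def)
      ultimately have "card N \<le> card (\<Union>T\<in>A (Suc k). (\<lambda>x. T - {x}) ` T)" by (intro card_mono)
      also have "\<dots> \<le> (\<Sum>T\<in>A (Suc k). card ((\<lambda>x. T - {x}) ` T))" by (rule card_UN_le[OF finA])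
      also have "\<dots> \<le> (\<Sum>T\<in>A (Suc k). Suc k)"
      proof (rule sum_mono)
        fix T assume "T \<in> A (Suc k)"
        thus "card ((\<lambda>x. T - {x}) ` T) \<le> Suc k" using card_image_le[of T] subfin by (auto simp: A_def)
      qed
      also have "\<dots> = Suc k * a (Suc k)" by (simp add: a_def)
      finally show ?thesis .
    qed
    have cM: "card M \<le> mc"
    proof -
      have "M \<subseteq> mis E V"
      proof
        fix S assume S: "S \<in> M"
        hence SI: "independent_set V E S" and mx: "\<forall>x\<in>V - S. \<not> independent_set V E (insert x S)"
          by (auto simp: M_def A_def I_def)
        show "S \<in> mis E V" unfolding mis_def
        proof (intro CollectI conjI ballI)
          show "S \<subseteq> V" using SI by (simp add: independent_set_def)
          show "\<not> E x y" if "x \<in> S" "y \<in> S" for x y using SI that by (simp add: independent_set_def)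
          fix x assume x: "x \<in> V - S"
          hence "\<not> independent_set V E (insert x S)" using mx by blast
          moreover have "insert x S \<subseteq> V" using x SI by (auto simp: independent_set_def)
          ultimately obtain p q where pq: "p \<in> insert x S" "q \<in> insert x S" "E p q"
            by (auto simp: independent_set_def)
          show "\<exists>y\<in>S. E x y"
            using pq SI x irr sym \<open>insert x S \<subseteq> V\<close> unfolding independent_set_def by blast
        qed
      qed
      thus ?thesis unfolding mc_def using finite_mis[OF fV] by (rule card_mono[rotated])
    qed
    have aS: "real (a (Suc k)) \<ge> 1" using apos[of "Suc k"] kal by simp
    show ?thesis
    proof (cases "Suc k < n")
      case True
      have h: "a k \<le> mc + Suc k * a (Suc k)" using akMN cN cM by linarith
      have "real (a k) \<le> real (mc + Suc k * a (Suc k))" using h by (rule of_nat_mono)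
      also have "\<dots> = real mc + real (Suc k) * real (a (Suc k))" by (simp add: algebra_simps)
      also have "\<dots> \<le> 3 powr (real n / 3) * real (a (Suc k)) + (real n - 1) * real (a (Suc k))"
      proof (rule add_mono)
        show "real mc \<le> 3 powr (real n / 3) * real (a (Suc k))"
        proof -
          have "3 powr (real n / 3) * 1 \<le> 3 powr (real n / 3) * real (a (Suc k))"
            using aS by (intro mult_left_mono) auto
          thus ?thesis using mcb by linarith
        qed
        have "real (Suc k) \<le> real n - 1" using True by linarith
        thus "real (Suc k) * real (a (Suc k)) \<le> (real n - 1) * real (a (Suc k))"
          by (rule mult_right_mono) simp
      qed
      also have "\<dots> = B * real (a (Suc k))" by (simp add: B_def algebra_simps)
      finally show ?thesis .
    next
      case False
      hence kn: "Suc k = n" using kal aln by simp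
      have "M = {}"
      proof (rule ccontr)
        assume "M \<noteq> {}"
        then obtain S where S: "S \<in> M" by blast
        hence SI: "independent_set V E S" and cS: "card S = k"
          and mx: "\<forall>x\<in>V - S. \<not> independent_set V E (insert x S)"
          by (auto simp: M_def A_def I_def)
        have "T = V" using card_subset_eq[OF fV TV] T(2) kal kn aln assms(3) by simp
        hence VI: "independent_set V E V" using T(1) by (simp add: I_def)
        have SV: "S \<subseteq> V" using SI by (simp add: independent_set_def)
        have "S \<noteq> V" using cS kn assms(3) by auto
        then obtain x where x: "x \<in> V - S" using SV by blast
        have "independent_set V E (insert x S)"
          using VI x SV by (auto simp: independent_set_def)
        with mx x show False by blast
      qed
      hence "a k \<le> n * a (Suc k)" using akMN cN kn by simp
      hence "real (a k) \<le> real n * real (a (Suc k))" by (metis of_nat_le_iff of_nat_mult)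
      also have "\<dots> \<le> B * real (a (Suc k))" using Bn by (rule mult_right_mono) simp
      finally show ?thesis .
    qed
  qed
  define b where "b k = real (a k) * B^k" for k
  have "cmod (z / of_real B) \<le> 1"
  proof (rule EK[where b=b and m=al])
    show "b k \<le> b (Suc k)" if "k < al" for k
    proof -
      have "real (a k) * B^k \<le> (B * real (a (Suc k))) * B^k"
        using ratio[OF that] Bpos by (intro mult_right_mono) auto
      thus ?thesis by (simp add: b_def algebra_simps)
    qed
    show "0 \<le> b 0" by (simp add: b_def)
    show "0 < b al" using apos[of al] Bpos by (simp add: b_def)
    have "(\<Sum>k\<le>al. complex_of_real (b k) * (z / of_real B)^k) = (\<Sum>k\<le>al. of_nat (a k) * z^k)"
    proof (rule sum.cong)
      fix k
      have "complex_of_real (B^k) * (z / of_real B)^k = z^k"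
        using Bpos by (simp add: power_divide)
      thus "complex_of_real (b k) * (z / of_real B)^k = of_nat (a k) * z^k"
        by (simp add: b_def mult.assoc)
    qed simp
    also have "\<dots> = 0" using polyeq assms(4) by (simp add: independence_root_def)
    finally show "(\<Sum>k\<le>al. complex_of_real (b k) * (z / of_real B)^k) = 0" .
  qed
  hence "cmod z / B \<le> 1" using Bpos by (simp add: norm_divide)
  hence "cmod z \<le> B" using Bpos by (simp add: divide_le_eq)
  thus ?thesis by (simp add: B_def)
qed

end
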